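(* Let $S\in\mathbb{S}^n$ and let $(U,V)\in\mathbb{R}^{n\times n}$ be an invertible matrix with $U\in\mathbb{R}^{n\times d}$, $V\in\mathbb{R}^{n\times(n-d)}$, such that $S=VV^T$ and $\mathbb{S}^n_+\cap S^{\perp}=\{UWU^T:W\in\mathbb{S}^d_+\}$. Let $$X=(U,V)\begin{pmatrix}W&Z\\Z^T&R\end{pmatrix}(U,V)^T$$ with $W\in\mathbb{S}^d_+$, $R\in\mathbb{S}^{n-d}$, $Z\in\mathbb{R}^{d\times(n-d)}$. Then there exist $P\in\mathbb{S}^n_+$ and $\alpha\in\mathbb{R}$ with $X=P+\alpha S$ (i.e. $X\in\mathbb{S}^n_++\operatorname{lin}S$) if and only if $\operatorname{null}W\subseteq\operatorname{null}Z^T$.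
   Context: $\mathbb{S}^n$ denotes real symmetric $n\times n$ matrices with trace inner product, $\mathbb{S}^n_+$ the positive semidefinite cone, $S^{\perp}=\{X\in\mathbb{S}^n:\operatorname{trace}(SX)=0\}$, $\operatorname{lin}S=\{\alpha S:\alpha\in\mathbb{R}\}$. *)

theory Defs
  imports "Jordan_Normal_Form.Matrix_Kernel"
begin

definition mtrace :: "real mat \<Rightarrow> real" where
  "mtrace A = (\<Sum>i<dim_row A. A $$ (i,i))"

definition psd :: "nat \<Rightarrow> real mat \<Rightarrow> bool" where
  "psd n A \<longleftrightarrow> A \<in> carrier_mat n n \<and> transpose_mat A = A \<and>
     (\<forall>v\<in>carrier_vec n. 0 \<le> v \<bullet> (A *\<^sub>v v))"

definition cat_cols :: "real mat \<Rightarrow> real mat \<Rightarrow> real mat" where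
  "cat_cols U V = mat (dim_row U) (dim_col U + dim_col V)
     (\<lambda>(i,j). if j < dim_col U then U $$ (i,j) else V $$ (i, j - dim_col U))"

end

theory Submission
  imports Defs
begin


lemma lin_zero: fixes a b :: real assumes "\<forall>t. 0 \<le> 2*t*a + b" shows "a = 0"
proof (rule ccontr)
  assume "a \<noteq> 0"
  have "0 \<le> 2*(-(\<bar>b\<bar>+1)/(2*a))*a + b" using assms by blast
  also have "\<dots> = -(\<bar>b\<bar>+1) + b" using \<open>a\<noteq>0\<close> by (simp add: field_simps)
  finally show False by linarith
qed

lemma sum_upd: "p \<notin> I \<Longrightarrow> (\<Sum>j\<in>I. f j * (if j = p then v else x j)) = (\<Sum>j\<in>I. f j * x j)"
  by (intro sum.cong) auto

lemma sum_upd2: "p \<notin> I \<Longrightarrow> (\<Sum>j\<in>I. (if j = p then v else x j) * f j) = (\<Sum>j\<in>I. x j * f j)"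
  by (intro sum.cong) auto

lemma qf_upd: "p \<notin> I \<Longrightarrow> (\<Sum>i\<in>I. \<Sum>j\<in>I. (if i = p then v else x i) * W i j * (if j = p then v else x j)) = (\<Sum>i\<in>I. \<Sum>j\<in>I. x i * W i j * x j)"
  by (intro sum.cong) auto

lemma qf_insert:
  fixes W :: "nat \<Rightarrow> nat \<Rightarrow> real"
  assumes "finite I" "p \<notin> I" "\<forall>i\<in>insert p I. \<forall>j\<in>insert p I. W i j = W j i"
  shows "(\<Sum>i\<in>insert p I. \<Sum>j\<in>insert p I. x i * W i j * x j)
     = x p * W p p * x p + 2 * x p * (\<Sum>j\<in>I. W p j * x j) + (\<Sum>i\<in>I. \<Sum>j\<in>I. x i * W i j * x j)"
proof -
  have "(\<Sum>i\<in>insert p I. \<Sum>j\<in>insert p I. x i * W i j * x j)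
      = x p * W p p * x p + (\<Sum>j\<in>I. x p * W p j * x j) + (\<Sum>i\<in>I. x i * W i p * x p)
        + (\<Sum>i\<in>I. \<Sum>j\<in>I. x i * W i j * x j)"
    using assms(1,2) by (simp add: sum.distrib)
  moreover have "(\<Sum>i\<in>I. x i * W i p * x p) = (\<Sum>j\<in>I. x p * W p j * x j)"
  proof (intro sum.cong refl)
    fix j assume "j \<in> I"
    then have "W j p = W p j" using assms(3) by blast
    then show "x j * W j p * x p = x p * W p j * x j" by simp
  qed
  moreover have "(\<Sum>j\<in>I. x p * W p j * x j) = x p * (\<Sum>j\<in>I. W p j * x j)"
    by (simp add: sum_distrib_left mult.assoc)
  ultimately show ?thesis by simp
qed

lemma range_lemma:
  fixes W :: "nat \<Rightarrow> nat \<Rightarrow> real" and z :: "nat \<Rightarrow> real"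
  assumes "finite I"
  and "\<forall>i\<in>I. \<forall>j\<in>I. W i j = W j i"
  and "\<forall>x. 0 \<le> (\<Sum>i\<in>I. \<Sum>j\<in>I. x i * W i j * x j)"
  and "\<forall>x. (\<forall>i\<in>I. (\<Sum>j\<in>I. W i j * x j) = 0) \<longrightarrow> (\<Sum>i\<in>I. z i * x i) = 0"
  shows "\<exists>c. \<forall>i\<in>I. (\<Sum>j\<in>I. W i j * c j) = z i"
  using assms
proof (induction I arbitrary: W z rule: finite_induct)
  case empty
  then show ?case by simp
next
  case (insert p I)
  note fin = insert.hyps(1) and pI = insert.hyps(2)
  note sym = insert.prems(1) and psd = insert.prems(2) and ker = insert.prems(3)
  note QI = qf_insert[OF fin pI sym]
  have np[simp]: "\<And>j. j \<in> I \<Longrightarrow> (j = p) = False" using pI by blast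
  have symI: "\<forall>i\<in>I. \<forall>j\<in>I. W i j = W j i" using sym by blast
  have symp: "\<And>i. i \<in> I \<Longrightarrow> W i p = W p i" using sym by blast
  have Wpp: "0 \<le> W p p"
  proof -
    have "0 \<le> (\<Sum>i\<in>insert p I. \<Sum>j\<in>insert p I. ((\<lambda>_. 0)(p:=1)) i * W i j * ((\<lambda>_. 0)(p:=1)) j)"
      using psd by blast
    also have "\<dots> = W p p" unfolding QI using sum_upd[OF pI] qf_upd[OF pI] by simp
    finally show ?thesis .
  qed
  show ?case
  proof (cases "W p p = 0")
    case True
    have row0: "\<forall>y. (\<Sum>j\<in>I. W p j * y j) = 0"
    proof
      fix y
      show "(\<Sum>j\<in>I. W p j * y j) = 0"
      proof (rule lin_zero, rule allI)
        fix t
        have "0 \<le> (\<Sum>i\<in>insert p I. \<Sum>j\<in>insert p I. (y(p:=t)) i * W i j * (y(p:=t)) j)"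
          using psd by blast
        also have "\<dots> = 2 * t * (\<Sum>j\<in>I. W p j * y j) + (\<Sum>i\<in>I. \<Sum>j\<in>I. y i * W i j * y j)"
          unfolding QI using True sum_upd[OF pI] qf_upd[OF pI] by simp
        finally show "0 \<le> 2 * t * (\<Sum>j\<in>I. W p j * y j) + (\<Sum>i\<in>I. \<Sum>j\<in>I. y i * W i j * y j)" .
      qed
    qed
    have Wp0: "\<forall>j\<in>I. W p j = 0"
    proof -
      have "(\<Sum>j\<in>I. W p j * W p j) = 0" using row0 by blast
      then have "\<forall>j\<in>I. W p j * W p j = 0"
        using sum_nonneg_eq_0_iff[OF fin, of "\<lambda>j. W p j * W p j"] by simp
      then show ?thesis by simp
    qed
    have zp: "z p = 0"
    proof -
      have "\<forall>i\<in>insert p I. (\<Sum>j\<in>insert p I. W i j * ((\<lambda>_. 0)(p:=1)) j) = 0"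
        using sum_upd[OF pI] pI True Wp0 symp by auto
      then have "(\<Sum>i\<in>insert p I. z i * ((\<lambda>_. 0)(p:=1)) i) = 0" using ker by blast
      then show ?thesis using sum_upd[OF pI] pI fin by simp
    qed
    have "\<exists>c. \<forall>i\<in>I. (\<Sum>j\<in>I. W i j * c j) = z i"
    proof (rule insert.IH[OF symI])
      show "\<forall>x. 0 \<le> (\<Sum>i\<in>I. \<Sum>j\<in>I. x i * W i j * x j)"
      proof
        fix x
        have "0 \<le> (\<Sum>i\<in>insert p I. \<Sum>j\<in>insert p I. (x(p:=0)) i * W i j * (x(p:=0)) j)"
          using psd by blast
        then show "0 \<le> (\<Sum>i\<in>I. \<Sum>j\<in>I. x i * W i j * x j)"
          unfolding QI using qf_upd[OF pI] by simp
      qed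
      show "\<forall>x. (\<forall>i\<in>I. (\<Sum>j\<in>I. W i j * x j) = 0) \<longrightarrow> (\<Sum>i\<in>I. z i * x i) = 0"
      proof (intro allI impI)
        fix x assume h: "\<forall>i\<in>I. (\<Sum>j\<in>I. W i j * x j) = 0"
        have "\<forall>i\<in>insert p I. (\<Sum>j\<in>insert p I. W i j * (x(p:=0)) j) = 0"
          using h sum_upd[OF pI] pI fin row0 by auto
        then have "(\<Sum>i\<in>insert p I. z i * (x(p:=0)) i) = 0" using ker by blast
        then show "(\<Sum>i\<in>I. z i * x i) = 0" using sum_upd[OF pI] pI fin by simp
      qed
    qed
    then obtain c where c: "\<forall>i\<in>I. (\<Sum>j\<in>I. W i j * c j) = z i" by blast
    have "\<forall>i\<in>insert p I. (\<Sum>j\<in>insert p I. W i j * (c(p:=0)) j) = z i"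
      using c sum_upd[OF pI] pI fin row0 zp by auto
    then show ?thesis by blast
  next
    case False
    define a where "a = W p p"
    have apos: "a > 0" using False Wpp a_def by simp
    define W' where "W' = (\<lambda>i j. W i j - W i p * W p j / a)"
    define z' where "z' = (\<lambda>i. z i - W i p * z p / a)"
    have rowsum: "\<And>x i. (\<Sum>j\<in>I. W' i j * x j) = (\<Sum>j\<in>I. W i j * x j) - W i p * (\<Sum>j\<in>I. W p j * x j) / a"
      unfolding W'_def by (simp add: algebra_simps sum_subtractf sum_distrib_left sum_divide_distrib)
    have symI': "\<forall>i\<in>I. \<forall>j\<in>I. W' i j = W' j i"
    proof (intro ballI)
      fix i j assume "i \<in> I" "j \<in> I"
      then have "W i j = W j i" "W i p = W p i" "W j p = W p j" using sym by blast+
      then show "W' i j = W' j i" unfolding W'_def by simp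
    qed
    have qf': "\<And>x. (\<Sum>i\<in>I. \<Sum>j\<in>I. x i * W' i j * x j) = (\<Sum>i\<in>I. \<Sum>j\<in>I. x i * W i j * x j) - (\<Sum>j\<in>I. W p j * x j)^2 / a"
    proof -
      fix x
      have "(\<Sum>i\<in>I. \<Sum>j\<in>I. x i * W' i j * x j) = (\<Sum>i\<in>I. \<Sum>j\<in>I. x i * W i j * x j - (x i * W i p) * (W p j * x j) / a)"
        unfolding W'_def by (intro sum.cong refl) (simp add: algebra_simps)
      also have "\<dots> = (\<Sum>i\<in>I. \<Sum>j\<in>I. x i * W i j * x j) - (\<Sum>i\<in>I. \<Sum>j\<in>I. (x i * W i p) * (W p j * x j)) / a"
        by (simp add: sum_subtractf sum_divide_distrib)
      also have "(\<Sum>i\<in>I. \<Sum>j\<in>I. (x i * W i p) * (W p j * x j)) = (\<Sum>i\<in>I. x i * W i p) * (\<Sum>j\<in>I. W p j * x j)"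
        by (rule sum_product[symmetric])
      also have "(\<Sum>i\<in>I. x i * W i p) = (\<Sum>j\<in>I. W p j * x j)"
        using symp by (intro sum.cong) auto
      finally show "(\<Sum>i\<in>I. \<Sum>j\<in>I. x i * W' i j * x j) = (\<Sum>i\<in>I. \<Sum>j\<in>I. x i * W i j * x j) - (\<Sum>j\<in>I. W p j * x j)^2 / a"
        by (simp add: power2_eq_square)
    qed
    have "\<exists>c. \<forall>i\<in>I. (\<Sum>j\<in>I. W' i j * c j) = z' i"
    proof (rule insert.IH[OF symI'])
      show "\<forall>x. 0 \<le> (\<Sum>i\<in>I. \<Sum>j\<in>I. x i * W' i j * x j)"
      proof
        fix x
        define s where "s = (\<Sum>j\<in>I. W p j * x j)"
        have "0 \<le> (\<Sum>i\<in>insert p I. \<Sum>j\<in>insert p I. (x(p:=-s/a)) i * W i j * (x(p:=-s/a)) j)"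
          using psd by blast
        also have "\<dots> = (-s/a) * a * (-s/a) + 2 * (-s/a) * s + (\<Sum>i\<in>I. \<Sum>j\<in>I. x i * W i j * x j)"
          unfolding QI using qf_upd[OF pI] sum_upd[OF pI] by (simp add: s_def a_def)
        also have "\<dots> = (\<Sum>i\<in>I. \<Sum>j\<in>I. x i * W' i j * x j)"
          unfolding qf' s_def[symmetric] using apos by (simp add: field_simps power2_eq_square)
        finally show "0 \<le> (\<Sum>i\<in>I. \<Sum>j\<in>I. x i * W' i j * x j)" .
      qed
      show "\<forall>x. (\<forall>i\<in>I. (\<Sum>j\<in>I. W' i j * x j) = 0) \<longrightarrow> (\<Sum>i\<in>I. z' i * x i) = 0"
      proof (intro allI impI)
        fix x assume h: "\<forall>i\<in>I. (\<Sum>j\<in>I. W' i j * x j) = 0"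
        define s where "s = (\<Sum>j\<in>I. W p j * x j)"
        have "\<forall>i\<in>insert p I. (\<Sum>j\<in>insert p I. W i j * (x(p:=-s/a)) j) = 0"
        proof
          fix i assume i: "i \<in> insert p I"
          show "(\<Sum>j\<in>insert p I. W i j * (x(p:=-s/a)) j) = 0"
          proof (cases "i = p")
            case True
            then show ?thesis using pI fin sum_upd[OF pI] apos by (simp add: s_def a_def)
          next
            case False
            then have iI: "i \<in> I" using i by auto
            have "(\<Sum>j\<in>I. W i j * x j) - W i p * s / a = 0" using h iI rowsum s_def by metis
            then show ?thesis using pI fin sum_upd[OF pI] by simp
          qed
        qed
        then have "(\<Sum>i\<in>insert p I. z i * (x(p:=-s/a)) i) = 0" using ker by blast
        then have e: "z p * (-s/a) + (\<Sum>i\<in>I. z i * x i) = 0" using sum_upd[OF pI] pI fin by simp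
        have "(\<Sum>i\<in>I. z' i * x i) = (\<Sum>i\<in>I. z i * x i) - z p * (\<Sum>i\<in>I. x i * W i p) / a"
          unfolding z'_def by (simp add: algebra_simps sum_subtractf sum_distrib_left sum_divide_distrib)
        also have "(\<Sum>i\<in>I. x i * W i p) = s"
          unfolding s_def using symp by (intro sum.cong) auto
        finally show "(\<Sum>i\<in>I. z' i * x i) = 0" using e by simp
      qed
    qed
    then obtain c where c: "\<forall>i\<in>I. (\<Sum>j\<in>I. W' i j * c j) = z' i" by blast
    define t where "t = (\<Sum>j\<in>I. W p j * c j)"
    have "\<forall>i\<in>insert p I. (\<Sum>j\<in>insert p I. W i j * (c(p:=(z p - t)/a)) j) = z i"
    proof
      fix i assume i: "i \<in> insert p I"
      show "(\<Sum>j\<in>insert p I. W i j * (c(p:=(z p - t)/a)) j) = z i"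
      proof (cases "i = p")
        case True
        then show ?thesis using pI fin sum_upd[OF pI] apos by (simp add: t_def a_def field_simps)
      next
        case False
        then have iI: "i \<in> I" using i by auto
        have "(\<Sum>j\<in>I. W i j * c j) - W i p * t / a = z' i" using c iI rowsum t_def by metis
        then show ?thesis using pI fin sum_upd[OF pI] apos unfolding z'_def by (simp add: field_simps)
      qed
    qed
    then show ?thesis by blast
  qed
qed



lemma sq_le_sum: fixes y :: "nat \<Rightarrow> real"
  assumes "k < m" shows "y k * y k \<le> (\<Sum>l<m. y l * y l)"
  using assms by (intro member_le_sum) auto

lemma prod_bound: fixes a b S :: real
  assumes "a*a \<le> S" "b*b \<le> S" shows "\<bar>a*b\<bar> \<le> S"
proof -
  have S0: "0 \<le> S" using assms(1) zero_le_square[of a] by linarith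
  have "(\<bar>a*b\<bar>)^2 = (a*a)*(b*b)" by (simp add: power2_eq_square)
  also have "\<dots> \<le> S * S" using assms S0 by (intro mult_mono) auto
  finally have "(\<bar>a*b\<bar>)^2 \<le> S^2" by (simp add: power2_eq_square)
  then show ?thesis using S0 by (meson abs_ge_zero power2_le_imp_le)
qed

lemma qf_bound: fixes G :: "nat \<Rightarrow> nat \<Rightarrow> real" and y :: "nat \<Rightarrow> real"
  shows "- (\<Sum>k<m. \<Sum>l<m. \<bar>G k l\<bar>) * (\<Sum>l<m. y l * y l) \<le> (\<Sum>k<m. \<Sum>l<m. y k * G k l * y l)"
proof -
  let ?S = "(\<Sum>l<m. y l * y l)"
  have "\<And>k l. k < m \<Longrightarrow> l < m \<Longrightarrow> - (\<bar>G k l\<bar> * ?S) \<le> y k * G k l * y l"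
  proof -
    fix k l assume "k < m" "l < m"
    then have "\<bar>y k * y l\<bar> \<le> ?S" using sq_le_sum prod_bound by blast
    then have "\<bar>G k l\<bar> * \<bar>y k * y l\<bar> \<le> \<bar>G k l\<bar> * ?S" by (intro mult_left_mono) auto
    moreover have "- (\<bar>G k l\<bar> * \<bar>y k * y l\<bar>) \<le> y k * G k l * y l"
    proof -
      have "\<bar>y k * G k l * y l\<bar> = \<bar>G k l\<bar> * \<bar>y k * y l\<bar>" by (simp add: abs_mult)
      then show ?thesis by (metis abs_ge_minus_self minus_le_iff)
    qed
    ultimately show "- (\<bar>G k l\<bar> * ?S) \<le> y k * G k l * y l" by linarith
  qed
  then have "(\<Sum>k<m. \<Sum>l<m. - (\<bar>G k l\<bar> * ?S)) \<le> (\<Sum>k<m. \<Sum>l<m. y k * G k l * y l)"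
    by (intro sum_mono) auto
  moreover have "(\<Sum>k<m. \<Sum>l<m. - (\<bar>G k l\<bar> * ?S)) = - (\<Sum>k<m. \<Sum>l<m. \<bar>G k l\<bar>) * ?S"
    by (simp add: sum_negf sum_distrib_right)
  ultimately show ?thesis by simp
qed

definition qform :: "nat \<Rightarrow> nat \<Rightarrow> (nat \<Rightarrow> nat \<Rightarrow> real) \<Rightarrow> (nat \<Rightarrow> nat \<Rightarrow> real) \<Rightarrow> (nat \<Rightarrow> nat \<Rightarrow> real) \<Rightarrow> real \<Rightarrow> (nat \<Rightarrow> real) \<Rightarrow> (nat \<Rightarrow> real) \<Rightarrow> real" where
  "qform d m W Z R \<alpha> x y = (\<Sum>i<d. \<Sum>j<d. x i * W i j * x j) + (\<Sum>i<d. \<Sum>k<m. x i * Z i k * y k)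
     + (\<Sum>k<m. \<Sum>i<d. y k * Z i k * x i) + (\<Sum>k<m. \<Sum>l<m. y k * R k l * y l) - \<alpha> * (\<Sum>k<m. y k * y k)"

lemma abstract_if:
  fixes W Z R :: "nat \<Rightarrow> nat \<Rightarrow> real"
  assumes symW: "\<forall>i<d. \<forall>j<d. W i j = W j i"
    and psdW: "\<forall>x. 0 \<le> (\<Sum>i<d. \<Sum>j<d. x i * W i j * x j)"
    and ker: "\<forall>x. (\<forall>i<d. (\<Sum>j<d. W i j * x j) = 0) \<longrightarrow> (\<forall>k<m. (\<Sum>i<d. Z i k * x i) = 0)"
  shows "\<exists>\<alpha>. \<forall>x y. 0 \<le> qform d m W Z R \<alpha> x y"
proof -
  have "\<forall>k. \<exists>c. k < m \<longrightarrow> (\<forall>i\<in>{..<d}. (\<Sum>j\<in>{..<d}. W i j * c j) = Z i k)"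
  proof
    fix k
    show "\<exists>c. k < m \<longrightarrow> (\<forall>i\<in>{..<d}. (\<Sum>j\<in>{..<d}. W i j * c j) = Z i k)"
    proof (cases "k < m")
      case True
      have "\<exists>c. \<forall>i\<in>{..<d}. (\<Sum>j\<in>{..<d}. W i j * c j) = Z i k"
      proof (rule range_lemma)
        show "\<forall>i\<in>{..<d}. \<forall>j\<in>{..<d}. W i j = W j i" using symW by blast
        show "\<forall>x. 0 \<le> (\<Sum>i\<in>{..<d}. \<Sum>j\<in>{..<d}. x i * W i j * x j)" using psdW by blast
        show "\<forall>x. (\<forall>i\<in>{..<d}. (\<Sum>j\<in>{..<d}. W i j * x j) = 0) \<longrightarrow> (\<Sum>i\<in>{..<d}. Z i k * x i) = 0"
          using ker True by (simp add: mult.commute)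
      qed auto
      then show ?thesis by blast
    qed auto
  qed
  then obtain f where f: "\<forall>k. k < m \<longrightarrow> (\<forall>i\<in>{..<d}. (\<Sum>j\<in>{..<d}. W i j * f k j) = Z i k)"
    using choice[of "\<lambda>k c. k < m \<longrightarrow> (\<forall>i\<in>{..<d}. (\<Sum>j\<in>{..<d}. W i j * c j) = Z i k)"] by blast
  define C where "C = (\<lambda>j k. f k j)"
  have C: "\<And>k i. k < m \<Longrightarrow> i < d \<Longrightarrow> (\<Sum>j<d. W i j * C j k) = Z i k"
    unfolding C_def using f by blast
  define G where "G = (\<lambda>k l. R k l - (\<Sum>i<d. C i k * Z i l))"
  define K where "K = (\<Sum>k<m. \<Sum>l<m. \<bar>G k l\<bar>)"
  show ?thesis
  proof (intro exI allI)
    fix x y :: "nat \<Rightarrow> real"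
    define v where "v = (\<lambda>i. \<Sum>k<m. C i k * y k)"
    define r where "r = (\<lambda>i. \<Sum>k<m. Z i k * y k)"
    define Wx where "Wx = (\<lambda>i. \<Sum>j<d. W i j * x j)"
    define u where "u = (\<lambda>i. x i + v i)"
    have Wv: "\<And>i. i < d \<Longrightarrow> (\<Sum>j<d. W i j * v j) = r i"
    proof -
      fix i assume i: "i < d"
      have "(\<Sum>j<d. W i j * v j) = (\<Sum>j<d. \<Sum>k<m. W i j * C j k * y k)"
        unfolding v_def by (simp add: sum_distrib_left mult.assoc)
      also have "\<dots> = (\<Sum>k<m. \<Sum>j<d. W i j * C j k * y k)" by (rule sum.swap)
      also have "\<dots> = (\<Sum>k<m. (\<Sum>j<d. W i j * C j k) * y k)" by (simp add: sum_distrib_right)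
      also have "\<dots> = r i" unfolding r_def using C i by (intro sum.cong) auto
      finally show "(\<Sum>j<d. W i j * v j) = r i" .
    qed
    have swapW: "\<And>a b. (\<Sum>i<d. \<Sum>j<d. a i * W i j * b j) = (\<Sum>i<d. \<Sum>j<d. b i * W i j * a j)"
    proof -
      fix a b :: "nat \<Rightarrow> real"
      have "(\<Sum>i<d. \<Sum>j<d. a i * W i j * b j) = (\<Sum>j<d. \<Sum>i<d. a i * W i j * b j)" by (rule sum.swap)
      also have "\<dots> = (\<Sum>j<d. \<Sum>i<d. b j * W j i * a i)"
      proof (intro sum.cong refl)
        fix i j assume "i \<in> {..<d}" "j \<in> {..<d}"
        then have "i < d" "j < d" by auto
        then have "W j i = W i j" using symW by blast
        then show "a j * W j i * b i = b i * W i j * a j" by simp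
      qed
      finally show "(\<Sum>i<d. \<Sum>j<d. a i * W i j * b j) = (\<Sum>i<d. \<Sum>j<d. b i * W i j * a j)" .
    qed
    have rowform: "\<And>a b. (\<Sum>i<d. \<Sum>j<d. a i * W i j * b j) = (\<Sum>i<d. a i * (\<Sum>j<d. W i j * b j))"
      by (simp add: sum_distrib_left mult.assoc)
    have uWu: "(\<Sum>i<d. \<Sum>j<d. u i * W i j * u j) = (\<Sum>i<d. \<Sum>j<d. x i * W i j * x j) + 2 * (\<Sum>i<d. x i * r i) + (\<Sum>i<d. v i * r i)"
    proof -
      have "(\<Sum>i<d. \<Sum>j<d. u i * W i j * u j) = (\<Sum>i<d. \<Sum>j<d. x i * W i j * x j) + (\<Sum>i<d. \<Sum>j<d. x i * W i j * v j)
          + (\<Sum>i<d. \<Sum>j<d. v i * W i j * x j) + (\<Sum>i<d. \<Sum>j<d. v i * W i j * v j)"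
        unfolding u_def by (simp add: algebra_simps sum.distrib)
      also have "(\<Sum>i<d. \<Sum>j<d. v i * W i j * x j) = (\<Sum>i<d. \<Sum>j<d. x i * W i j * v j)" by (rule swapW)
      also have "(\<Sum>i<d. \<Sum>j<d. x i * W i j * v j) = (\<Sum>i<d. x i * r i)"
        unfolding rowform using Wv by (intro sum.cong) auto
      also have "(\<Sum>i<d. \<Sum>j<d. v i * W i j * v j) = (\<Sum>i<d. v i * r i)"
        unfolding rowform using Wv by (intro sum.cong) auto
      finally show ?thesis by simp
    qed
    have cross1: "(\<Sum>i<d. \<Sum>k<m. x i * Z i k * y k) = (\<Sum>i<d. x i * r i)"
      unfolding r_def by (simp add: sum_distrib_left mult.assoc)
    have cross2: "(\<Sum>k<m. \<Sum>i<d. y k * Z i k * x i) = (\<Sum>i<d. x i * r i)"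
      unfolding cross1[symmetric] by (subst sum.swap) (simp add: mult.commute mult.left_commute)
    have vr: "(\<Sum>i<d. v i * r i) = (\<Sum>k<m. \<Sum>l<m. y k * (\<Sum>i<d. C i k * Z i l) * y l)"
    proof -
      have "(\<Sum>i<d. v i * r i) = (\<Sum>i<d. \<Sum>k<m. \<Sum>l<m. (C i k * y k) * (Z i l * y l))"
        unfolding v_def r_def by (simp add: sum_product)
      also have "\<dots> = (\<Sum>k<m. \<Sum>i<d. \<Sum>l<m. (C i k * y k) * (Z i l * y l))" by (rule sum.swap)
      also have "\<dots> = (\<Sum>k<m. \<Sum>l<m. \<Sum>i<d. (C i k * y k) * (Z i l * y l))" by (intro sum.cong refl sum.swap)
      also have "\<dots> = (\<Sum>k<m. \<Sum>l<m. y k * (\<Sum>i<d. C i k * Z i l) * y l)"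
        by (simp add: sum_distrib_left sum_distrib_right mult_ac)
      finally show ?thesis .
    qed
    have G: "(\<Sum>k<m. \<Sum>l<m. y k * G k l * y l) = (\<Sum>k<m. \<Sum>l<m. y k * R k l * y l) - (\<Sum>i<d. v i * r i)"
      unfolding vr G_def by (simp add: algebra_simps sum_subtractf)
    have "qform d m W Z R (-K) x y = (\<Sum>i<d. \<Sum>j<d. u i * W i j * u j) + (\<Sum>k<m. \<Sum>l<m. y k * G k l * y l) + K * (\<Sum>k<m. y k * y k)"
      unfolding qform_def uWu G cross1 cross2 by simp
    moreover have "0 \<le> (\<Sum>i<d. \<Sum>j<d. u i * W i j * u j)" using psdW by blast
    moreover have "- K * (\<Sum>k<m. y k * y k) \<le> (\<Sum>k<m. \<Sum>l<m. y k * G k l * y l)"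
      unfolding K_def by (rule qf_bound)
    ultimately show "0 \<le> qform d m W Z R (-K) x y" by simp
  qed
qed

lemma abstract_only_if:
  fixes W Z R :: "nat \<Rightarrow> nat \<Rightarrow> real"
  assumes Q: "\<forall>x y. 0 \<le> qform d m W Z R \<alpha> x y"
    and x: "\<forall>i<d. (\<Sum>j<d. W i j * x j) = 0"
  shows "\<forall>k<m. (\<Sum>i<d. Z i k * x i) = 0"
proof -
  define a where "a = (\<lambda>k. \<Sum>i<d. Z i k * x i)"
  define A where "A = (\<Sum>k<m. a k * a k)"
  define c where "c = (\<Sum>k<m. \<Sum>l<m. a k * R k l * a l) - \<alpha> * A"
  have "\<forall>t. 0 \<le> 2 * t * A + c"
  proof
    fix t
    have xx: "(\<Sum>i<d. \<Sum>j<d. (t * x i) * W i j * (t * x j)) = 0"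
    proof -
      have "(\<Sum>i<d. \<Sum>j<d. (t * x i) * W i j * (t * x j)) = (\<Sum>i<d. (t * t * x i) * (\<Sum>j<d. W i j * x j))"
        by (simp add: sum_distrib_left mult_ac)
      also have "\<dots> = 0" using x by simp
      finally show ?thesis .
    qed
    have c1: "(\<Sum>i<d. \<Sum>k<m. (t * x i) * Z i k * a k) = t * A"
    proof -
      have "(\<Sum>i<d. \<Sum>k<m. (t * x i) * Z i k * a k) = (\<Sum>k<m. \<Sum>i<d. (t * x i) * Z i k * a k)" by (rule sum.swap)
      also have "\<dots> = (\<Sum>k<m. t * a k * a k)" unfolding a_def
        by (intro sum.cong refl) (simp add: sum_distrib_left sum_distrib_right mult_ac)
      finally show ?thesis unfolding A_def by (simp add: sum_distrib_left mult.assoc)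
    qed
    have c2: "(\<Sum>k<m. \<Sum>i<d. a k * Z i k * (t * x i)) = t * A"
      unfolding A_def a_def by (simp add: sum_distrib_left sum_distrib_right mult_ac)
    have "0 \<le> qform d m W Z R \<alpha> (\<lambda>i. t * x i) a" using Q by blast
    also have "\<dots> = 2 * t * A + c" unfolding qform_def xx c1 c2 c_def A_def by simp
    finally show "0 \<le> 2 * t * A + c" .
  qed
  then have "A = 0" by (rule lin_zero)
  then have "\<forall>k\<in>{..<m}. a k * a k = 0" unfolding A_def
    by (subst sum_nonneg_eq_0_iff[symmetric]) auto
  then show ?thesis unfolding a_def by simp
qed



lemma quad_sum: fixes A :: "real mat"
  assumes "A \<in> carrier_mat n n" "v \<in> carrier_vec n"
  shows "v \<bullet> (A *\<^sub>v v) = (\<Sum>i<n. \<Sum>j<n. v$i * A$$(i,j) * v$j)"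
  using assms unfolding scalar_prod_def
  by (auto simp: row_def scalar_prod_def sum_distrib_left mult.assoc atLeast0LessThan intro!: sum.cong)

lemma sum_split: "(\<Sum>i<(d::nat)+m. f i) = (\<Sum>i<d. f i) + (\<Sum>k<m. f (d+k))"
  by (induction m) (auto simp: add.commute add.left_commute)

lemma quad_add_smult: fixes A B :: "real mat"
  assumes "A \<in> carrier_mat n n" "B \<in> carrier_mat n n" "v \<in> carrier_vec n"
  shows "v \<bullet> ((A + c \<cdot>\<^sub>m B) *\<^sub>v v) = v \<bullet> (A *\<^sub>v v) + c * (v \<bullet> (B *\<^sub>v v))"
proof -
  have "A + c \<cdot>\<^sub>m B \<in> carrier_mat n n" using assms by auto
  then have "v \<bullet> ((A + c \<cdot>\<^sub>m B) *\<^sub>v v) = (\<Sum>i<n. \<Sum>j<n. v$i * (A + c \<cdot>\<^sub>m B)$$(i,j) * v$j)"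
    using quad_sum assms by blast
  also have "\<dots> = (\<Sum>i<n. \<Sum>j<n. v$i * A$$(i,j) * v$j + c * (v$i * B$$(i,j) * v$j))"
    using assms by (intro sum.cong refl) (simp add: ring_distribs)
  also have "\<dots> = (\<Sum>i<n. \<Sum>j<n. v$i * A$$(i,j) * v$j) + c * (\<Sum>i<n. \<Sum>j<n. v$i * B$$(i,j) * v$j)"
    by (simp add: sum.distrib sum_distrib_left)
  finally show ?thesis using quad_sum[OF assms(1,3)] quad_sum[OF assms(2,3)] by simp
qed

lemma quad_MAMt: fixes A M :: "real mat"
  assumes M: "M \<in> carrier_mat n k" and A: "A \<in> carrier_mat k k" and v: "v \<in> carrier_vec n"
  shows "v \<bullet> ((M * A * transpose_mat M) *\<^sub>v v) = (transpose_mat M *\<^sub>v v) \<bullet> (A *\<^sub>v (transpose_mat M *\<^sub>v v))"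
proof -
  have Mt: "transpose_mat M \<in> carrier_mat k n" using M by simp
  have u: "transpose_mat M *\<^sub>v v \<in> carrier_vec k" using Mt v by simp
  have MA: "M * A \<in> carrier_mat n k" using M A by simp
  have Au: "A *\<^sub>v (transpose_mat M *\<^sub>v v) \<in> carrier_vec k" using A u by simp
  have "(M * A * transpose_mat M) *\<^sub>v v = (M * A) *\<^sub>v (transpose_mat M *\<^sub>v v)"
    by (rule assoc_mult_mat_vec[OF MA Mt v])
  also have "\<dots> = M *\<^sub>v (A *\<^sub>v (transpose_mat M *\<^sub>v v))"
    by (rule assoc_mult_mat_vec[OF M A u])
  finally have e: "(M * A * transpose_mat M) *\<^sub>v v = M *\<^sub>v (A *\<^sub>v (transpose_mat M *\<^sub>v v))" .
  show ?thesis unfolding e using transpose_vec_mult_scalar[OF M Au v] by simp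
qed

lemma quad_MMt: fixes M :: "real mat"
  assumes M: "M \<in> carrier_mat n k" and v: "v \<in> carrier_vec n"
  shows "v \<bullet> ((M * transpose_mat M) *\<^sub>v v) = (transpose_mat M *\<^sub>v v) \<bullet> (transpose_mat M *\<^sub>v v)"
proof -
  have Mt: "transpose_mat M \<in> carrier_mat k n" using M by simp
  have u: "transpose_mat M *\<^sub>v v \<in> carrier_vec k" using Mt v by simp
  have e: "(M * transpose_mat M) *\<^sub>v v = M *\<^sub>v (transpose_mat M *\<^sub>v v)"
    by (rule assoc_mult_mat_vec[OF M Mt v])
  show ?thesis unfolding e using transpose_vec_mult_scalar[OF M u v] by simp
qed

lemma cat_cols_carrier: "U \<in> carrier_mat n d \<Longrightarrow> V \<in> carrier_mat n m \<Longrightarrow> cat_cols U V \<in> carrier_mat n (d+m)"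
  unfolding cat_cols_def by auto

lemma cat_cols_col: assumes "U \<in> carrier_mat n d" "V \<in> carrier_mat n m" "i < d + m"
  shows "col (cat_cols U V) i = (if i < d then col U i else col V (i - d))"
  using assms unfolding cat_cols_def by (auto intro!: eq_vecI)

lemma Mt_entry: fixes U V :: "real mat" assumes "U \<in> carrier_mat n d" "V \<in> carrier_mat n m" "i < d + m"
  shows "(transpose_mat (cat_cols U V) *\<^sub>v v) $ i = (if i < d then col U i \<bullet> v else col V (i - d) \<bullet> v)"
  using assms cat_cols_col[OF assms] cat_cols_carrier[OF assms(1,2)] by auto

lemma Vt_entry: fixes V :: "real mat" assumes "V \<in> carrier_mat n m" "k < m"
  shows "(transpose_mat V *\<^sub>v v) $ k = col V k \<bullet> v"
  using assms by auto




lemma mv_sum: fixes A :: "real mat"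
  assumes "A \<in> carrier_mat nr nc" "v \<in> carrier_vec nc" "i < nr"
  shows "(A *\<^sub>v v) $ i = (\<Sum>j<nc. A$$(i,j) * v$j)"
  using assms by (auto simp: scalar_prod_def row_def atLeast0LessThan intro!: sum.cong)

lemma quad_block: fixes W Z R :: "real mat"
  assumes W: "W \<in> carrier_mat d d" and Z: "Z \<in> carrier_mat d m" and R: "R \<in> carrier_mat m m"
    and w: "w \<in> carrier_vec (d+m)"
  shows "w \<bullet> (four_block_mat W Z (transpose_mat Z) R *\<^sub>v w)
     = qform d m (\<lambda>i j. W$$(i,j)) (\<lambda>i j. Z$$(i,j)) (\<lambda>i j. R$$(i,j)) 0 (\<lambda>i. w$i) (\<lambda>k. w$(d+k))"
proof -
  have B: "four_block_mat W Z (transpose_mat Z) R \<in> carrier_mat (d+m) (d+m)" using W R by simp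
  have "w \<bullet> (four_block_mat W Z (transpose_mat Z) R *\<^sub>v w) =
     (\<Sum>i<d+m. \<Sum>j<d+m. w$i * four_block_mat W Z (transpose_mat Z) R $$(i,j) * w$j)"
    by (rule quad_sum[OF B w])
  also have "\<dots> = qform d m (\<lambda>i j. W$$(i,j)) (\<lambda>i j. Z$$(i,j)) (\<lambda>i j. R$$(i,j)) 0 (\<lambda>i. w$i) (\<lambda>k. w$(d+k))"
    unfolding sum_split qform_def using W Z R
    by (simp add: sum.distrib)
  finally show ?thesis .
qed

lemma qform_cong:
  assumes "\<And>i. i < d \<Longrightarrow> x i = x' i" "\<And>k. k < m \<Longrightarrow> y k = y' k"
  shows "qform d m W Z R \<alpha> x y = qform d m W Z R \<alpha> x' y'"
  unfolding qform_def using assms by simp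

lemma qform_alpha: "qform d m W Z R \<alpha> x y = qform d m W Z R 0 x y - \<alpha> * (\<Sum>k<m. y k * y k)"
  unfolding qform_def by simp




theorem lemma9:
  fixes n d :: nat and S U V W Z R :: "real mat"
  assumes "d \<le> n"
    and "S \<in> carrier_mat n n" and "transpose_mat S = S"
    and "U \<in> carrier_mat n d" and "V \<in> carrier_mat n (n - d)"
    and "invertible_mat (cat_cols U V)"
    and "S = V * transpose_mat V"
    and "{X. psd n X \<and> mtrace (S * X) = 0} = {U * W' * transpose_mat U | W'. psd d W'}"
    and "psd d W"
    and "R \<in> carrier_mat (n - d) (n - d)" and "transpose_mat R = R"
    and "Z \<in> carrier_mat d (n - d)"
  shows "(\<exists>P \<alpha>. psd n P \<and>
            cat_cols U V * four_block_mat W Z (transpose_mat Z) R * transpose_mat (cat_cols U V)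
              = P + \<alpha> \<cdot>\<^sub>m S)
         \<longleftrightarrow> mat_kernel W \<subseteq> mat_kernel (transpose_mat Z)"
proof -
  define m where "m = n - d"
  have nd: "n = d + m" using assms(1) unfolding m_def by simp
  have Sc: "S \<in> carrier_mat n n" and Ssym: "transpose_mat S = S" using assms(2,3) by auto
  have Uc: "U \<in> carrier_mat n d" using assms(4) .
  have Vc: "V \<in> carrier_mat n m" using assms(5) unfolding m_def .
  have Rc: "R \<in> carrier_mat m m" and Rsym: "transpose_mat R = R" using assms(10,11) unfolding m_def by auto
  have Zc: "Z \<in> carrier_mat d m" using assms(12) unfolding m_def .
  have Wc: "W \<in> carrier_mat d d" and Wsym: "transpose_mat W = W"
    and Wpsd: "\<forall>v\<in>carrier_vec d. 0 \<le> v \<bullet> (W *\<^sub>v v)" using assms(9) unfolding psd_def by auto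
  define M where "M = cat_cols U V"
  have Mc: "M \<in> carrier_mat n n" unfolding M_def using cat_cols_carrier[OF Uc Vc] nd by simp
  define B where "B = four_block_mat W Z (transpose_mat Z) R"
  have Bc: "B \<in> carrier_mat n n" unfolding B_def nd using Wc Rc by simp
  have Bsym: "transpose_mat B = B" unfolding B_def
    using transpose_four_block_mat[OF Wc Zc _ Rc, of "transpose_mat Z"] Zc Wsym Rsym by simp
  define X where "X = M * B * transpose_mat M"
  have Xc: "X \<in> carrier_mat n n" unfolding X_def using Mc Bc by simp
  have Xsym: "transpose_mat X = X"
  proof -
    have "transpose_mat X = transpose_mat (transpose_mat M) * transpose_mat (M * B)"
      unfolding X_def by (rule transpose_mult[of _ n n _ n]) (use Mc Bc in auto)
    also have "transpose_mat (M * B) = transpose_mat B * transpose_mat M"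
      by (rule transpose_mult[of _ n n _ n]) (use Mc Bc in auto)
    finally show ?thesis unfolding X_def Bsym using Mc Bc by simp
  qed
  define Wf where "Wf = (\<lambda>i j. W$$(i,j))"
  define Zf where "Zf = (\<lambda>i j. Z$$(i,j))"
  define Rf where "Rf = (\<lambda>i j. R$$(i,j))"
  have qv: "\<And>(v::real vec) \<alpha>. v \<in> carrier_vec n \<Longrightarrow> v \<bullet> ((X + (-\<alpha>) \<cdot>\<^sub>m S) *\<^sub>v v)
      = qform d m Wf Zf Rf \<alpha> (\<lambda>i. col U i \<bullet> v) (\<lambda>k. col V k \<bullet> v)"
  proof -
    fix v :: "real vec" and \<alpha> :: real assume v: "v \<in> carrier_vec n"
    define w where "w = transpose_mat M *\<^sub>v v"
    have wc: "w \<in> carrier_vec (d+m)" unfolding w_def using Mc v nd by simp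
    have X1: "v \<bullet> (X *\<^sub>v v) = w \<bullet> (B *\<^sub>v w)" unfolding X_def w_def by (rule quad_MAMt[OF Mc Bc v])
    have X2: "w \<bullet> (B *\<^sub>v w) = qform d m Wf Zf Rf 0 (\<lambda>i. w$i) (\<lambda>k. w$(d+k))"
      unfolding B_def Wf_def Zf_def Rf_def by (rule quad_block[OF Wc Zc Rc wc])
    have X3: "qform d m Wf Zf Rf 0 (\<lambda>i. w$i) (\<lambda>k. w$(d+k)) = qform d m Wf Zf Rf 0 (\<lambda>i. col U i \<bullet> v) (\<lambda>k. col V k \<bullet> v)"
      by (rule qform_cong) (auto simp: w_def M_def Mt_entry[OF Uc Vc])
    have S1: "v \<bullet> (S *\<^sub>v v) = (\<Sum>k<m. (col V k \<bullet> v) * (col V k \<bullet> v))"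
    proof -
      have "v \<bullet> (S *\<^sub>v v) = (transpose_mat V *\<^sub>v v) \<bullet> (transpose_mat V *\<^sub>v v)"
        unfolding assms(7) by (rule quad_MMt[OF Vc v])
      also have "\<dots> = (\<Sum>k<m. (col V k \<bullet> v) * (col V k \<bullet> v))"
        unfolding scalar_prod_def[of "transpose_mat V *\<^sub>v v"] using Vc
        by (auto simp: atLeast0LessThan intro!: sum.cong)
      finally show ?thesis .
    qed
    show "v \<bullet> ((X + (-\<alpha>) \<cdot>\<^sub>m S) *\<^sub>v v) = qform d m Wf Zf Rf \<alpha> (\<lambda>i. col U i \<bullet> v) (\<lambda>k. col V k \<bullet> v)"
      unfolding quad_add_smult[OF Xc Sc v] X1 X2 X3 S1 qform_alpha[of _ _ _ _ _ \<alpha>] by simp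
  qed
  have surj: "\<And>x y. \<exists>v\<in>carrier_vec n. (\<forall>i<d. col U i \<bullet> v = x i) \<and> (\<forall>k<m. col V k \<bullet> v = y k)"
  proof -
    fix x y :: "nat \<Rightarrow> real"
    obtain Mi where Mi1: "M * Mi = 1\<^sub>m n" and Mi2: "Mi * M = 1\<^sub>m (dim_row Mi)"
      using assms(6) Mc unfolding M_def[symmetric] invertible_mat_def inverts_mat_def by auto
    have "dim_col Mi = n" using Mi1 Mc by (metis index_mult_mat(3) index_one_mat(3))
    moreover have "dim_row Mi = n" using Mi2 Mc by (metis index_mult_mat(3) index_one_mat(3) carrier_matD(2))
    ultimately have Mic: "Mi \<in> carrier_mat n n" by auto
    define w where "w = vec n (\<lambda>i. if i < d then x i else y (i - d))"
    define v where "v = transpose_mat Mi *\<^sub>v w"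
    have vc: "v \<in> carrier_vec n" unfolding v_def w_def using Mic by simp
    have "transpose_mat M *\<^sub>v v = (transpose_mat M * transpose_mat Mi) *\<^sub>v w"
      unfolding v_def using Mc Mic by (simp add: w_def)
    also have "transpose_mat M * transpose_mat Mi = transpose_mat (Mi * M)"
      using transpose_mult[OF Mic Mc] by simp
    also have "\<dots> = 1\<^sub>m n" using Mi2 Mic by simp
    finally have Mv: "transpose_mat M *\<^sub>v v = w" unfolding w_def by simp
    have "\<forall>i<d. col U i \<bullet> v = x i"
    proof (intro allI impI)
      fix i assume "i < d"
      then have "(transpose_mat M *\<^sub>v v) $ i = col U i \<bullet> v" unfolding M_def using Mt_entry[OF Uc Vc] by simp
      then show "col U i \<bullet> v = x i" unfolding Mv w_def using \<open>i<d\<close> nd by simp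
    qed
    moreover have "\<forall>k<m. col V k \<bullet> v = y k"
    proof (intro allI impI)
      fix k assume "k < m"
      then have "(transpose_mat M *\<^sub>v v) $ (d+k) = col V k \<bullet> v" unfolding M_def using Mt_entry[OF Uc Vc, of "d+k"] by simp
      then show "col V k \<bullet> v = y k" unfolding Mv w_def using \<open>k<m\<close> nd by simp
    qed
    ultimately show "\<exists>v\<in>carrier_vec n. (\<forall>i<d. col U i \<bullet> v = x i) \<and> (\<forall>k<m. col V k \<bullet> v = y k)"
      using vc by blast
  qed
  have stepA: "(\<exists>P \<alpha>. psd n P \<and> X = P + \<alpha> \<cdot>\<^sub>m S) \<longleftrightarrow> (\<exists>\<alpha>. psd n (X + (-\<alpha>) \<cdot>\<^sub>m S))"
  proof
    assume "\<exists>P \<alpha>. psd n P \<and> X = P + \<alpha> \<cdot>\<^sub>m S"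
    then obtain P \<alpha> where P: "psd n P" and XP: "X = P + \<alpha> \<cdot>\<^sub>m S" by blast
    have Pc: "P \<in> carrier_mat n n" using P unfolding psd_def by auto
    have "X + (-\<alpha>) \<cdot>\<^sub>m S = P"
      unfolding XP using Pc Sc by (intro eq_matI) auto
    then show "\<exists>\<alpha>. psd n (X + (-\<alpha>) \<cdot>\<^sub>m S)" using P by metis
  next
    assume "\<exists>\<alpha>. psd n (X + (-\<alpha>) \<cdot>\<^sub>m S)"
    then obtain \<alpha> where P: "psd n (X + (-\<alpha>) \<cdot>\<^sub>m S)" by blast
    have "X = (X + (-\<alpha>) \<cdot>\<^sub>m S) + \<alpha> \<cdot>\<^sub>m S" using Xc Sc by (intro eq_matI) auto
    then show "\<exists>P \<alpha>. psd n P \<and> X = P + \<alpha> \<cdot>\<^sub>m S" using P by blast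
  qed
  have stepB: "\<And>\<alpha>. psd n (X + (-\<alpha>) \<cdot>\<^sub>m S) \<longleftrightarrow> (\<forall>x y. 0 \<le> qform d m Wf Zf Rf \<alpha> x y)"
  proof -
    fix \<alpha>
    have Pc: "X + (-\<alpha>) \<cdot>\<^sub>m S \<in> carrier_mat n n" using Xc Sc by simp
    have Psym: "transpose_mat (X + (-\<alpha>) \<cdot>\<^sub>m S) = X + (-\<alpha>) \<cdot>\<^sub>m S"
    proof (rule eq_matI)
      fix i j assume ij: "i < dim_row (X + (-\<alpha>) \<cdot>\<^sub>m S)" "j < dim_col (X + (-\<alpha>) \<cdot>\<^sub>m S)"
      then have "i < n" "j < n" using Xc Sc by auto
      have "X $$ (j,i) = X $$ (i,j)" using Xsym \<open>i<n\<close> \<open>j<n\<close> Xc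
        by (metis carrier_matD(1,2) index_transpose_mat(1))
      moreover have "S $$ (j,i) = S $$ (i,j)" using Ssym \<open>i<n\<close> \<open>j<n\<close> Sc
        by (metis carrier_matD(1,2) index_transpose_mat(1))
      ultimately show "transpose_mat (X + (-\<alpha>) \<cdot>\<^sub>m S) $$ (i,j) = (X + (-\<alpha>) \<cdot>\<^sub>m S) $$ (i,j)"
        using \<open>i<n\<close> \<open>j<n\<close> Xc Sc by simp
    qed (use Xc Sc in auto)
    show "psd n (X + (-\<alpha>) \<cdot>\<^sub>m S) \<longleftrightarrow> (\<forall>x y. 0 \<le> qform d m Wf Zf Rf \<alpha> x y)"
    proof
      assume "psd n (X + (-\<alpha>) \<cdot>\<^sub>m S)"
      then have h: "\<forall>v\<in>carrier_vec n. 0 \<le> v \<bullet> ((X + (-\<alpha>) \<cdot>\<^sub>m S) *\<^sub>v v)" unfolding psd_def by blast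
      show "\<forall>x y. 0 \<le> qform d m Wf Zf Rf \<alpha> x y"
      proof (intro allI)
        fix x y
        obtain v where v: "v \<in> carrier_vec n" "\<forall>i<d. col U i \<bullet> v = x i" "\<forall>k<m. col V k \<bullet> v = y k"
          using surj by blast
        have "0 \<le> qform d m Wf Zf Rf \<alpha> (\<lambda>i. col U i \<bullet> v) (\<lambda>k. col V k \<bullet> v)"
          using h v(1) qv by metis
        also have "\<dots> = qform d m Wf Zf Rf \<alpha> x y" by (rule qform_cong) (use v in auto)
        finally show "0 \<le> qform d m Wf Zf Rf \<alpha> x y" .
      qed
    next
      assume "\<forall>x y. 0 \<le> qform d m Wf Zf Rf \<alpha> x y"
      then have "\<forall>v\<in>carrier_vec n. 0 \<le> v \<bullet> ((X + (-\<alpha>) \<cdot>\<^sub>m S) *\<^sub>v v)" using qv by metis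
      then show "psd n (X + (-\<alpha>) \<cdot>\<^sub>m S)" unfolding psd_def using Pc Psym by blast
    qed
  qed
  have stepC: "mat_kernel W \<subseteq> mat_kernel (transpose_mat Z) \<longleftrightarrow>
     (\<forall>x. (\<forall>i<d. (\<Sum>j<d. Wf i j * x j) = 0) \<longrightarrow> (\<forall>k<m. (\<Sum>i<d. Zf i k * x i) = 0))"
  proof -
    have Ztc: "transpose_mat Z \<in> carrier_mat m d" using Zc by simp
    have kW: "\<And>v. v \<in> carrier_vec d \<Longrightarrow> v \<in> mat_kernel W \<longleftrightarrow> (\<forall>i<d. (\<Sum>j<d. Wf i j * v$j) = 0)"
    proof -
      fix v :: "real vec" assume v: "v \<in> carrier_vec d"
      have "v \<in> mat_kernel W \<longleftrightarrow> W *\<^sub>v v = 0\<^sub>v d" unfolding mat_kernel_def using Wc v by auto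
      also have "\<dots> \<longleftrightarrow> (\<forall>i<d. (W *\<^sub>v v) $ i = 0)"
        using Wc v by (simp add: vec_eq_iff)
      also have "\<dots> \<longleftrightarrow> (\<forall>i<d. (\<Sum>j<d. Wf i j * v$j) = 0)"
        unfolding Wf_def using mv_sum[OF Wc v] by auto
      finally show "v \<in> mat_kernel W \<longleftrightarrow> (\<forall>i<d. (\<Sum>j<d. Wf i j * v$j) = 0)" .
    qed
    have kZ: "\<And>v. v \<in> carrier_vec d \<Longrightarrow> v \<in> mat_kernel (transpose_mat Z) \<longleftrightarrow> (\<forall>k<m. (\<Sum>i<d. Zf i k * v$i) = 0)"
    proof -
      fix v :: "real vec" assume v: "v \<in> carrier_vec d"
      have "v \<in> mat_kernel (transpose_mat Z) \<longleftrightarrow> transpose_mat Z *\<^sub>v v = 0\<^sub>v m" unfolding mat_kernel_def using Zc v by auto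
      also have "\<dots> \<longleftrightarrow> (\<forall>k<m. (transpose_mat Z *\<^sub>v v) $ k = 0)"
        using Zc v by (simp add: vec_eq_iff)
      also have "\<dots> \<longleftrightarrow> (\<forall>k<m. (\<Sum>i<d. Zf i k * v$i) = 0)"
        unfolding Zf_def using mv_sum[OF Ztc v] Zc by auto
      finally show "v \<in> mat_kernel (transpose_mat Z) \<longleftrightarrow> (\<forall>k<m. (\<Sum>i<d. Zf i k * v$i) = 0)" .
    qed
    have kc: "mat_kernel W \<subseteq> carrier_vec d" unfolding mat_kernel_def using Wc by auto
    show ?thesis
    proof
      assume sub: "mat_kernel W \<subseteq> mat_kernel (transpose_mat Z)"
      show "\<forall>x. (\<forall>i<d. (\<Sum>j<d. Wf i j * x j) = 0) \<longrightarrow> (\<forall>k<m. (\<Sum>i<d. Zf i k * x i) = 0)"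
      proof (rule allI, rule impI)
        fix x assume h: "\<forall>i<d. (\<Sum>j<d. Wf i j * x j) = 0"
        define v where "v = vec d x"
        have vc: "v \<in> carrier_vec d" unfolding v_def by simp
        have "\<forall>i<d. (\<Sum>j<d. Wf i j * v$j) = 0" using h unfolding v_def by simp
        then have "v \<in> mat_kernel (transpose_mat Z)" using kW[OF vc] sub by blast
        then have "\<forall>k<m. (\<Sum>i<d. Zf i k * v$i) = 0" using kZ[OF vc] by blast
        then show "\<forall>k<m. (\<Sum>i<d. Zf i k * x i) = 0" unfolding v_def by simp
      qed
    next
      assume h: "\<forall>x. (\<forall>i<d. (\<Sum>j<d. Wf i j * x j) = 0) \<longrightarrow> (\<forall>k<m. (\<Sum>i<d. Zf i k * x i) = 0)"
      show "mat_kernel W \<subseteq> mat_kernel (transpose_mat Z)"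
      proof
        fix v assume v: "v \<in> mat_kernel W"
        then have vc: "v \<in> carrier_vec d" using kc by blast
        then have "\<forall>i<d. (\<Sum>j<d. Wf i j * v$j) = 0" using kW v by blast
        then have "\<forall>k<m. (\<Sum>i<d. Zf i k * v$i) = 0" using h by blast
        then show "v \<in> mat_kernel (transpose_mat Z)" using kZ[OF vc] by blast
      qed
    qed
  qed
  have symW: "\<forall>i<d. \<forall>j<d. Wf i j = Wf j i"
  proof (intro allI impI)
    fix i j assume "i < d" "j < d"
    then show "Wf i j = Wf j i" unfolding Wf_def using Wsym Wc
      by (metis carrier_matD(1,2) index_transpose_mat(1))
  qed
  have psdW: "\<forall>x. 0 \<le> (\<Sum>i<d. \<Sum>j<d. x i * Wf i j * x j)"
  proof
    fix x
    have "0 \<le> vec d x \<bullet> (W *\<^sub>v vec d x)" using Wpsd by simp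
    also have "\<dots> = (\<Sum>i<d. \<Sum>j<d. x i * Wf i j * x j)"
      unfolding quad_sum[OF Wc vec_carrier] Wf_def by simp
    finally show "0 \<le> (\<Sum>i<d. \<Sum>j<d. x i * Wf i j * x j)" .
  qed
  have "(\<exists>P \<alpha>. psd n P \<and> X = P + \<alpha> \<cdot>\<^sub>m S) \<longleftrightarrow> (\<exists>\<alpha>. \<forall>x y. 0 \<le> qform d m Wf Zf Rf \<alpha> x y)"
    unfolding stepA stepB ..
  also have "\<dots> \<longleftrightarrow> mat_kernel W \<subseteq> mat_kernel (transpose_mat Z)"
    unfolding stepC
  proof
    assume "\<exists>\<alpha>. \<forall>x y. 0 \<le> qform d m Wf Zf Rf \<alpha> x y"
    then obtain \<alpha> where "\<forall>x y. 0 \<le> qform d m Wf Zf Rf \<alpha> x y" by blast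
    then show "\<forall>x. (\<forall>i<d. (\<Sum>j<d. Wf i j * x j) = 0) \<longrightarrow> (\<forall>k<m. (\<Sum>i<d. Zf i k * x i) = 0)"
      using abstract_only_if by blast
  next
    assume "\<forall>x. (\<forall>i<d. (\<Sum>j<d. Wf i j * x j) = 0) \<longrightarrow> (\<forall>k<m. (\<Sum>i<d. Zf i k * x i) = 0)"
    then show "\<exists>\<alpha>. \<forall>x y. 0 \<le> qform d m Wf Zf Rf \<alpha> x y"
      using abstract_if[OF symW psdW] by blast
  qed
  finally show ?thesis unfolding X_def B_def M_def .
qed


end
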